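(* For every even integer $k\geq 4$, there exists a permutation graph $G$ with a matching $M$ in it such that the only alternating cycle with respect to $M$ in $G$ has length $k$.
   Context: Graphs are finite, simple, undirected. For a permutation $\pi$ of $\{1,\dots,n\}$, $G_\pi$ has vertex set $\{1,\dots,n\}$ and edges $ij$ with $(i-j)(\pi(i)-\pi(j))<0$; a permutation graph is a graph isomorphic to some $G_\pi$. A matching is a set of pairwise vertex-disjoint edges. Given a matching $M$, an alternating cycle with respect to $M$ is an even cycle of $G$ in which every second edge belongs to $M$. *)

theory Defs
  imports Main
begin

definition perm_graph_edges :: "nat \<Rightarrow> (nat \<Rightarrow> nat) \<Rightarrow> nat set set" where
  "perm_graph_edges n \<pi> =
     {{i, j} | i j. i \<in> {1..n} \<and> j \<in> {1..n} \<and>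
        (int i - int j) * (int (\<pi> i) - int (\<pi> j)) < 0}"

definition is_matching :: "nat set set \<Rightarrow> nat set set \<Rightarrow> bool" where
  "is_matching E M \<longleftrightarrow> M \<subseteq> E \<and> (\<forall>e\<in>M. \<forall>f\<in>M. e \<noteq> f \<longrightarrow> e \<inter> f = {})"

definition cyc_edge :: "nat list \<Rightarrow> nat \<Rightarrow> nat set" where
  "cyc_edge vs i = {vs ! i, vs ! ((i + 1) mod length vs)}"

definition alt_cycle :: "nat set set \<Rightarrow> nat set set \<Rightarrow> nat set set \<Rightarrow> bool" where
  "alt_cycle E M C \<longleftrightarrow>
     (\<exists>vs. distinct vs \<and> length vs \<ge> 3 \<and> even (length vs) \<and>
        (\<forall>i < length vs. cyc_edge vs i \<in> E) \<and>
        (\<forall>i < length vs. cyc_edge vs i \<in> M \<longleftrightarrow> even i) \<and>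
        C = cyc_edge vs ` {..<length vs})"

end

theory Submission
  imports Defs
begin

lemma succ_mod: "i < L \<Longrightarrow> (i + 1) mod L = (if i + 1 = L then 0 else (i::nat) + 1)"
  by (cases "i + 1 = L") simp_all

lemma alt_props:
  assumes "alt_cycle E M C"
  shows "C \<subseteq> E" "finite C" "card C \<le> card (\<Union>C)" "C \<noteq> {}"
   "\<And>v. v \<in> \<Union>C \<Longrightarrow> \<exists>e\<in>C. e \<in> M \<and> v \<in> e"
   "\<And>v. v \<in> \<Union>C \<Longrightarrow> \<exists>e\<in>C. e \<notin> M \<and> v \<in> e"
   "\<And>v e e'. e\<in>C \<Longrightarrow> e'\<in>C \<Longrightarrow> e\<notin>M \<Longrightarrow> e'\<notin>M \<Longrightarrow> v\<in>e \<Longrightarrow> v\<in>e' \<Longrightarrow> e = e'"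
proof -
  obtain vs where d: "distinct vs" and l3: "length vs \<ge> 3" and ev: "even (length vs)"
    and inE: "\<forall>i < length vs. cyc_edge vs i \<in> E"
    and inM: "\<forall>i < length vs. cyc_edge vs i \<in> M \<longleftrightarrow> even i"
    and Cd: "C = cyc_edge vs ` {..<length vs}"
    using assms unfolding alt_cycle_def by blast
  define L where "L = length vs"
  have ce: "cyc_edge vs i = {vs ! i, vs ! (if i + 1 = L then 0 else i + 1)}" if "i < L" for i
    using that unfolding cyc_edge_def L_def by (simp add: succ_mod)
  have nxtL: "(if i + 1 = L then 0 else i + 1) < L" if "i < L" for i using that l3 L_def by auto
  have U: "\<Union>C = set vs"
  proof
    show "\<Union>C \<subseteq> set vs" using Cd ce nxtL L_def by (auto simp: set_conv_nth)
  next
    show "set vs \<subseteq> \<Union>C"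
    proof
      fix v assume "v \<in> set vs"
      then obtain i where "i < L" "v = vs ! i" by (auto simp: set_conv_nth L_def)
      then show "v \<in> \<Union>C" using Cd ce L_def by auto
    qed
  qed
  show "C \<subseteq> E" using Cd inE by auto
  show "finite C" using Cd by simp
  show "card C \<le> card (\<Union>C)" using Cd U d card_image_le[of "{..<length vs}" "cyc_edge vs"]
    by (simp add: distinct_card)
  show "C \<noteq> {}" using Cd l3 by (auto simp: lessThan_empty_iff)
  have pred: "\<exists>p<L. odd p \<and> vs ! i \<in> cyc_edge vs p" if "i < L" "even i" for i
  proof -
    define p where "p = (if i = 0 then L - 1 else i - 1)"
    have pL: "p < L" using that p_def by auto
    moreover have "odd p"
    proof (cases "i = 0")
      case True
      have "vs \<noteq> []" using l3 by auto
      then show ?thesis using True ev L_def l3 p_def by simp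
    next
      case False then show ?thesis using that p_def by simp
    qed
    moreover have pi: "(if p + 1 = L then 0 else p + 1) = i"
    proof (cases "i = 0")
      case True then show ?thesis using l3 L_def p_def by simp
    next
      case False then show ?thesis using that p_def by simp
    qed
    moreover have "vs ! i \<in> cyc_edge vs p" using ce[OF pL] pi by simp
    ultimately show ?thesis by blast
  qed
  have pred2: "\<exists>p<L. even p \<and> vs ! i \<in> cyc_edge vs p" if "i < L" "odd i" for i
  proof -
    have pL: "i - 1 < L" and "even (i - 1)" and pi: "(if (i - 1) + 1 = L then 0 else (i - 1) + 1) = i"
      using that by auto
    moreover have "vs ! i \<in> cyc_edge vs (i - 1)" using ce[OF pL] pi by simp
    ultimately show ?thesis by blast
  qed
  show "\<exists>e\<in>C. e \<in> M \<and> v \<in> e" if vC: "v \<in> \<Union>C" for v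
  proof -
    obtain i where i: "i < L" "v = vs ! i" using vC U by (auto simp: set_conv_nth L_def)
    show ?thesis
    proof (cases "even i")
      case True
      then show ?thesis using i inM ce Cd L_def by (auto intro!: bexI[of _ "cyc_edge vs i"])
    next
      case False
      then obtain p where "p < L" "even p" "v \<in> cyc_edge vs p" using pred2 i by auto
      then show ?thesis using inM Cd L_def by (auto intro!: bexI[of _ "cyc_edge vs p"])
    qed
  qed
  show "\<exists>e\<in>C. e \<notin> M \<and> v \<in> e" if vC: "v \<in> \<Union>C" for v
  proof -
    obtain i where i: "i < L" "v = vs ! i" using vC U by (auto simp: set_conv_nth L_def)
    show ?thesis
    proof (cases "even i")
      case False
      then show ?thesis using i inM ce Cd L_def by (auto intro!: bexI[of _ "cyc_edge vs i"])
    next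
      case True
      then obtain p where "p < L" "odd p" "v \<in> cyc_edge vs p" using pred i by auto
      then show ?thesis using inM Cd L_def by (auto intro!: bexI[of _ "cyc_edge vs p"])
    qed
  qed
  have injv: "\<And>x y. x < L \<Longrightarrow> y < L \<Longrightarrow> vs ! x = vs ! y \<Longrightarrow> x = y"
    using d L_def nth_eq_iff_index_eq by blast
  have idx: "(a = i \<and> odd i) \<or> (even i \<and> i = (if a + 1 = L then 0 else a + 1))"
    if "a < L" "odd a" "i < L" "vs ! i \<in> cyc_edge vs a" for a i
  proof -
    have "vs ! i = vs ! a \<or> vs ! i = vs ! (if a + 1 = L then 0 else a + 1)"
      using that(4) ce[OF that(1)] by simp
    then have "i = a \<or> i = (if a + 1 = L then 0 else a + 1)"
      using injv that(1,3) nxtL[OF that(1)] by blast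
    then show ?thesis using that ev L_def by auto
  qed
  show "e = e'" if hyp: "e\<in>C" "e'\<in>C" "e\<notin>M" "e'\<notin>M" "v\<in>e" "v\<in>e'" for v e e'
  proof -
    obtain a where a: "a < L" "e = cyc_edge vs a" using hyp Cd L_def by auto
    obtain b where b: "b < L" "e' = cyc_edge vs b" using hyp Cd L_def by auto
    have oa: "odd a" using a inM that L_def by auto
    have ob: "odd b" using b inM that L_def by auto
    have "v \<in> set vs" using hyp U by auto
    then obtain i where i: "i < L" "v = vs ! i" by (auto simp: set_conv_nth L_def)
    have ia: "(a = i \<and> odd i) \<or> (even i \<and> i = (if a + 1 = L then 0 else a + 1))"
      using idx[OF a(1) oa i(1)] a that i by auto
    have ib: "(b = i \<and> odd i) \<or> (even i \<and> i = (if b + 1 = L then 0 else b + 1))"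
      using idx[OF b(1) ob i(1)] b that i by auto
    have "a = b" using ia ib a b by (auto split: if_splits)
    then show ?thesis using a b by simp
  qed
qed

lemma cyc_inj:
  assumes "distinct vs" "length vs \<ge> 3"
  shows "inj_on (cyc_edge vs) {..<length vs}"
proof
  fix a b assume ab: "a \<in> {..<length vs}" "b \<in> {..<length vs}" "cyc_edge vs a = cyc_edge vs b"
  define L where "L = length vs"
  have ce: "cyc_edge vs i = {vs ! i, vs ! (if i + 1 = L then 0 else i + 1)}" if "i < L" for i
    using that unfolding cyc_edge_def L_def by (simp add: succ_mod)
  have nx: "(if i + 1 = L then 0 else i + 1) < L" if "i < L" for i using that assms L_def by auto
  have aL: "a < L" "b < L" using ab L_def by auto
  have eq: "{vs ! a, vs ! (if a + 1 = L then 0 else a + 1)} = {vs ! b, vs ! (if b + 1 = L then 0 else b + 1)}"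
    using ab ce aL by simp
  have inj: "\<And>x y. x < L \<Longrightarrow> y < L \<Longrightarrow> vs ! x = vs ! y \<Longrightarrow> x = y"
    using assms(1) L_def by (metis nth_eq_iff_index_eq)
  from eq have "(vs ! a = vs ! b) \<or> (vs ! a = vs ! (if b + 1 = L then 0 else b + 1) \<and> vs ! b = vs ! (if a + 1 = L then 0 else a + 1))"
    by (auto simp: doubleton_eq_iff)
  then show "a = b"
  proof
    assume "vs ! a = vs ! b" then show ?thesis using inj aL by blast
  next
    assume h: "vs ! a = vs ! (if b + 1 = L then 0 else b + 1) \<and> vs ! b = vs ! (if a + 1 = L then 0 else a + 1)"
    have e1: "a = (if b + 1 = L then 0 else b + 1)" using h inj[OF aL(1) nx[OF aL(2)]] by simp
    have e2: "b = (if a + 1 = L then 0 else a + 1)" using h inj[OF aL(2) nx[OF aL(1)]] by simp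
    have L3: "L \<ge> 3" using assms(2) L_def by simp
    show ?thesis
    proof (cases "b + 1 = L")
      case True
      then have "a = 0" using e1 by simp
      then show ?thesis using e2 True L3 by simp
    next
      case False
      then have "a = b + 1" using e1 by simp
      then show ?thesis using e2 L3 aL by (cases "a + 1 = L") simp_all
    qed
  qed
qed

definition piK :: "nat \<Rightarrow> nat \<Rightarrow> nat" where
  "piK k v = (if odd v then (if v = k - 1 then k - 1 else v + 3) else (if v = 2 then 2 else v - 3))"

lemma piK_odd: "piK (2*m) (2*a+1) = (if a + 1 = m then 2*m - 1 else 2*a+4)"
  by (cases "a+1 = m") (auto simp: piK_def)
lemma piK_even: "piK (2*m) (2*a+2) = (if a = 0 then 2 else 2*a - 1)"
  by (cases "a = 0") (auto simp: piK_def)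

lemma nat_par: "(\<exists>a. v = 2*a+1) \<or> (\<exists>a. v = 2*a+2) \<or> (v::nat) = 0"
  by presburger

lemma edge_piK:
  assumes "k = 2*m" "m \<ge> 2" "u \<in> {1..k}" "w \<in> {1..k}" "u < w" "piK k u > piK k w"
  shows "(odd u \<and> w = u+1) \<or> (odd u \<and> w = u+3) \<or> (odd u \<and> w = u+5) \<or> (u = 2 \<and> w = 4) \<or> (u = k-3 \<and> w = k-1)"
proof -
  from nat_par[of u] assms(3) obtain a where ua: "u = 2*a+1 \<or> u = 2*a+2" by auto
  from nat_par[of w] assms(4) obtain b where wb: "w = 2*b+1 \<or> w = 2*b+2" by auto
  have r: "u \<le> 2*m" "w \<le> 2*m" "u < w" using assms by auto
  from ua show ?thesis
  proof
    assume u: "u = 2*a+1"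
    have pu: "piK k u = (if a + 1 = m then 2*m - 1 else 2*a+4)" using u assms(1) piK_odd by simp
    from wb show ?thesis
    proof
      assume w: "w = 2*b+1"
      have pw: "piK k w = (if b + 1 = m then 2*m - 1 else 2*b+4)" using w assms(1) piK_odd by simp
      have i: "(if b + 1 = m then 2*m - 1 else 2*b+4) < (if a + 1 = m then 2*m - 1 else 2*a+4)"
        using pu pw assms(6) by simp
      have "u = k-3 \<and> w = k-1" using i r u w assms(1) by (simp split: if_splits; arith)
      then show ?thesis by blast
    next
      assume w: "w = 2*b+2"
      have pw: "piK k w = (if b = 0 then 2 else 2*b - 1)" using w assms(1) piK_even by simp
      have i: "(if b = 0 then 2 else 2*b - 1) < (if a + 1 = m then 2*m - 1 else 2*a+4)"
        using pu pw assms(6) by simp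
      have "w = u+1 \<or> w = u+3 \<or> w = u+5" using i r u w by (simp split: if_splits; arith)
      then show ?thesis using u by auto
    qed
  next
    assume u: "u = 2*a+2"
    have pu: "piK k u = (if a = 0 then 2 else 2*a - 1)" using u assms(1) piK_even by simp
    from wb show ?thesis
    proof
      assume w: "w = 2*b+1"
      have pw: "piK k w = (if b + 1 = m then 2*m - 1 else 2*b+4)" using w assms(1) piK_odd by simp
      have i: "(if b + 1 = m then 2*m - 1 else 2*b+4) < (if a = 0 then 2 else 2*a - 1)"
        using pu pw assms(6) by simp
      have False using i r u w by (simp split: if_splits; arith)
      then show ?thesis by blast
    next
      assume w: "w = 2*b+2"
      have pw: "piK k w = (if b = 0 then 2 else 2*b - 1)" using w assms(1) piK_even by simp
      have i: "(if b = 0 then 2 else 2*b - 1) < (if a = 0 then 2 else 2*a - 1)"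
        using pu pw assms(6) by simp
      have "u = 2 \<and> w = 4" using i r u w by (simp split: if_splits; arith)
      then show ?thesis by blast
    qed
  qed
qed

lemma pge_iff:
  "{u,v} \<in> perm_graph_edges n \<pi> \<longleftrightarrow> u \<in> {1..n} \<and> v \<in> {1..n} \<and>
     (int u - int v) * (int (\<pi> u) - int (\<pi> v)) < 0"
proof
  assume "{u,v} \<in> perm_graph_edges n \<pi>"
  then obtain i j where ij: "{u,v} = {i,j}" "i \<in> {1..n}" "j \<in> {1..n}"
    "(int i - int j) * (int (\<pi> i) - int (\<pi> j)) < 0"
    unfolding perm_graph_edges_def by blast
  from ij(1) have "(u = i \<and> v = j) \<or> (u = j \<and> v = i)" by (auto simp: doubleton_eq_iff)
  then show "u \<in> {1..n} \<and> v \<in> {1..n} \<and> (int u - int v) * (int (\<pi> u) - int (\<pi> v)) < 0"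
  proof
    assume "u = j \<and> v = i"
    moreover have "(int j - int i) * (int (\<pi> j) - int (\<pi> i)) = (int i - int j) * (int (\<pi> i) - int (\<pi> j))"
      by (simp add: algebra_simps)
    ultimately show ?thesis using ij by auto
  qed (use ij in auto)
next
  assume "u \<in> {1..n} \<and> v \<in> {1..n} \<and> (int u - int v) * (int (\<pi> u) - int (\<pi> v)) < 0"
  then show "{u,v} \<in> perm_graph_edges n \<pi>" unfolding perm_graph_edges_def by blast
qed

lemma pge_elem:
  assumes "e \<in> perm_graph_edges n \<pi>"
  shows "\<exists>u v. e = {u,v} \<and> u \<in> {1..n} \<and> v \<in> {1..n} \<and> u < v \<and> \<pi> u > \<pi> v"
proof -
  obtain i j where ij: "e = {i,j}" "i \<in> {1..n}" "j \<in> {1..n}"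
    "(int i - int j) * (int (\<pi> i) - int (\<pi> j)) < 0"
    using assms unfolding perm_graph_edges_def by blast
  from ij(4) have "(i < j \<and> \<pi> i > \<pi> j) \<or> (j < i \<and> \<pi> j > \<pi> i)"
    by (auto simp: mult_less_0_iff)
  then show ?thesis using ij by (metis insert_commute)
qed

lemma prod_neg: "u < w \<Longrightarrow> \<pi> u > \<pi> w \<Longrightarrow> (int u - int w) * (int (\<pi> u) - int (\<pi> w)) < 0"
  by (simp add: mult_less_0_iff)


definition MK :: "nat \<Rightarrow> nat set set" where
  "MK m = {{2*j+1, 2*j+2} | j. j < m}"

lemma MK_mem: "j < m \<Longrightarrow> {2*j+1, 2*j+2} \<in> MK m"
  unfolding MK_def by blast

lemma MK_diff: "{x, y} \<in> MK m \<Longrightarrow> x = y + 1 \<or> y = x + 1"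
  unfolding MK_def by (auto simp: doubleton_eq_iff)

lemma MK_elem: "e \<in> MK m \<Longrightarrow> \<exists>j<m. e = {2*j+1, 2*j+2}"
  unfolding MK_def by blast

lemma E_mem:
  assumes "u < w"
  shows "{u,w} \<in> perm_graph_edges k (piK k) \<longleftrightarrow> 1 \<le> u \<and> w \<le> k \<and> piK k u > piK k w"
  using assms by (auto simp: pge_iff mult_less_0_iff)

lemma nbr_even:
  assumes k: "k = 2*m" "m \<ge> 2" and e: "{v,w} \<in> perm_graph_edges k (piK k)"
    and nM: "{v,w} \<notin> MK m" and v: "v = 2*a+2"
  shows "(w + 3 = v \<or> w + 5 = v \<or> (v = 2 \<and> w = 4) \<or> (v = 4 \<and> w = 2)) \<and> 1 \<le> w \<and> w \<le> k"
proof -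
  have r: "v \<in> {1..k}" "w \<in> {1..k}" and p: "(int v - int w) * (int (piK k v) - int (piK k w)) < 0"
    using e by (auto simp: pge_iff)
  have "v \<noteq> w" using p by auto
  then have "v < w \<or> w < v" by arith
  then have "w + 3 = v \<or> w + 5 = v \<or> (v = 2 \<and> w = 4) \<or> (v = 4 \<and> w = 2)"
  proof
    assume vw: "v < w"
    then have "piK k v > piK k w" using p by (auto simp: mult_less_0_iff)
    from edge_piK[OF k r vw this]
    show ?thesis using v k by (auto; presburger)
  next
    assume vw: "w < v"
    then have "piK k w > piK k v" using p by (auto simp: mult_less_0_iff)
    from edge_piK[OF k r(2,1) vw this]
    have c: "(odd w \<and> v = w + 1) \<or> (odd w \<and> v = w + 3) \<or> (odd w \<and> v = w + 5) \<or> (w = 2 \<and> v = 4) \<or> (w = k - 3 \<and> v = k - 1)" .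
    have "\<not> (odd w \<and> v = w + 1)"
    proof
      assume "odd w \<and> v = w + 1"
      then have "w = 2*a+1" using v by simp
      moreover have "a < m" using r v k by simp
      ultimately have "{v,w} \<in> MK m" using MK_mem[of a m] v by (simp add: insert_commute)
      then show False using nM by simp
    qed
    then show ?thesis using c v k by (auto; presburger)
  qed
  then show ?thesis using r by simp
qed

lemma nbr_odd:
  assumes k: "k = 2*m" "m \<ge> 2" and e: "{v,w} \<in> perm_graph_edges k (piK k)"
    and nM: "{v,w} \<notin> MK m" and v: "v = 2*a+1"
  shows "(w = v + 3 \<or> w = v + 5 \<or> (v = k - 3 \<and> w = k - 1) \<or> (v = k - 1 \<and> w = k - 3)) \<and> 1 \<le> w \<and> w \<le> k"
proof -
  have r: "v \<in> {1..k}" "w \<in> {1..k}" and p: "(int v - int w) * (int (piK k v) - int (piK k w)) < 0"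
    using e by (auto simp: pge_iff)
  have "v \<noteq> w" using p by auto
  then have "v < w \<or> w < v" by arith
  then have "w = v + 3 \<or> w = v + 5 \<or> (v = k - 3 \<and> w = k - 1) \<or> (v = k - 1 \<and> w = k - 3)"
  proof
    assume vw: "v < w"
    then have "piK k v > piK k w" using p by (auto simp: mult_less_0_iff)
    from edge_piK[OF k r vw this]
    have c: "(odd v \<and> w = v + 1) \<or> (odd v \<and> w = v + 3) \<or> (odd v \<and> w = v + 5) \<or> (v = 2 \<and> w = 4) \<or> (v = k - 3 \<and> w = k - 1)" .
    have "w \<noteq> v + 1"
    proof
      assume "w = v + 1"
      then have "w = 2*a+2" using v by simp
      moreover have "a < m" using r v k \<open>w = v + 1\<close> by simp
      ultimately have "{v,w} \<in> MK m" using MK_mem[of a m] v by simp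
      then show False using nM by simp
    qed
    then show ?thesis using c v by (auto; presburger)
  next
    assume vw: "w < v"
    then have "piK k w > piK k v" using p by (auto simp: mult_less_0_iff)
    from edge_piK[OF k r(2,1) vw this]
    show ?thesis using v k by (auto; presburger)
  qed
  then show ?thesis using r by simp
qed

definition gE :: "nat \<Rightarrow> nat set" where
  "gE j = (if j \<le> 1 then {2,4} else {2*j-3, 2*j+2})"

lemma gE_notM: "gE j \<notin> MK m"
proof
  assume "gE j \<in> MK m"
  then show False
  proof (cases "j \<le> 1")
    case True
    then show False using \<open>gE j \<in> MK m\<close> MK_diff[of 2 4 m] by (simp add: gE_def)
  next
    case False
    then have "{2*j-3, 2*j+2} \<in> MK m" using \<open>gE j \<in> MK m\<close> by (simp add: gE_def)
    from MK_diff[OF this] False show False by arith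
  qed
qed

lemma uniq:
  assumes k: "k = 2*m" "m \<ge> 2"
  and CE: "C \<subseteq> perm_graph_edges k (piK k)"
  and ne: "C \<noteq> {}"
  and A: "\<And>v. v \<in> \<Union>C \<Longrightarrow> \<exists>e\<in>C. e \<in> MK m \<and> v \<in> e"
  and B: "\<And>v. v \<in> \<Union>C \<Longrightarrow> \<exists>e\<in>C. e \<notin> MK m \<and> v \<in> e"
  and Un: "\<And>v e e'. e\<in>C \<Longrightarrow> e'\<in>C \<Longrightarrow> e\<notin>MK m \<Longrightarrow> e'\<notin>MK m \<Longrightarrow> v\<in>e \<Longrightarrow> v\<in>e' \<Longrightarrow> e = e'"
  shows "MK m \<subseteq> C \<and> {2,4} \<in> C \<and> (\<forall>j. j+3 \<le> m \<longrightarrow> {2*j+1, 2*j+6} \<in> C) \<and> {k-3,k-1} \<in> C"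
proof -
  define V where "V = \<Union>C"
  have inV: "x \<in> V" if "e \<in> C" "x \<in> e" for e x using that V_def by auto
  have rng: "1 \<le> x \<and> x \<le> k" if xV0: "x \<in> V" for x
  proof -
    obtain e where "e \<in> C" "x \<in> e" using xV0 V_def by auto
    then have "e \<in> perm_graph_edges k (piK k)" using CE by auto
    then obtain u w where "e = {u,w}" "u \<in> {1..k}" "w \<in> {1..k}" using pge_elem by blast
    then show ?thesis using \<open>x \<in> e\<close> by auto
  qed
  have getnb: "\<exists>w. {v,w} \<in> C \<and> {v,w} \<notin> MK m" if vV0: "v \<in> V" for v
  proof -
    obtain e where e: "e \<in> C" "e \<notin> MK m" "v \<in> e" using B vV0 V_def by blast
    then have "e \<in> perm_graph_edges k (piK k)" using CE by auto
    then obtain x y where "e = {x,y}" using pge_elem by blast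
    then have "e = {v,y} \<or> e = {v,x}" using e(3) by auto
    then show ?thesis using e by blast
  qed
  have mate: "{2*j+1, 2*j+2} \<in> C" if mh: "v \<in> V" "v = 2*j+1 \<or> v = 2*j+2" for v j
  proof -
    obtain e where e: "e \<in> C" "e \<in> MK m" "v \<in> e" using A mh(1) V_def by blast
    then obtain i where i: "e = {2*i+1, 2*i+2}" using MK_elem by blast
    then have "v = 2*i+1 \<or> v = 2*i+2" using e by auto
    then have "i = j" using mh(2) by arith
    then show ?thesis using e i by simp
  qed
  have CEm: "e \<in> perm_graph_edges k (piK k)" if "e \<in> C" for e using that CE by auto
  have step1: "v \<in> V \<longrightarrow> 2 \<in> V" for v
  proof (induction v rule: less_induct)
    case (less v)
    show ?case
    proof
      assume vV: "v \<in> V"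
      have "v \<ge> 1" using rng vV by simp
      then obtain a where "v = 2*a+1 \<or> v = 2*a+2" using nat_par[of v] by auto
      then show "2 \<in> V"
      proof
        assume va: "v = 2*a+1"
        have "{2*a+1, 2*a+2} \<in> C" using mate vV va by blast
        then have aV: "2*a+2 \<in> V" using inV by blast
        show ?thesis
        proof (cases "a = 0")
          case True then show ?thesis using aV unfolding True by (simp only: mult_0_right add_0_left)
        next
          case False
          obtain w where w: "{2*a+2,w} \<in> C" "{2*a+2,w} \<notin> MK m" using getnb aV by blast
          have "(w + 3 = 2*a+2 \<or> w + 5 = 2*a+2 \<or> (2*a+2 = 2 \<and> w = 4) \<or> (2*a+2 = 4 \<and> w = 2)) \<and> 1 \<le> w \<and> w \<le> k"
            using nbr_even[OF k CEm[OF w(1)] w(2)] by simp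
          then have "w < v" using va False by arith
          moreover have "w \<in> V" using inV w(1) by blast
          ultimately show ?thesis using less by blast
        qed
      next
        assume va: "v = 2*a+2"
        show ?thesis
        proof (cases "a = 0")
          case True then show ?thesis using vV va unfolding True by (simp only: mult_0_right add_0_left)
        next
          case False
          obtain w where w: "{v,w} \<in> C" "{v,w} \<notin> MK m" using getnb vV by blast
          have "(w + 3 = v \<or> w + 5 = v \<or> (v = 2 \<and> w = 4) \<or> (v = 4 \<and> w = 2)) \<and> 1 \<le> w \<and> w \<le> k"
            using nbr_even[OF k CEm[OF w(1)] w(2) va] by simp
          then have "w < v" using va False by arith
          moreover have "w \<in> V" using inV w(1) by blast
          ultimately show ?thesis using less by blast
        qed
      qed
    qed
  qed
  obtain e0 where "e0 \<in> C" using ne by blast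
  then obtain x y where "e0 = {x,y}" using CEm pge_elem by blast
  then have "x \<in> V" using inV \<open>e0 \<in> C\<close> by blast
  then have two: "2 \<in> V" using step1 by blast
  have step2: "j < m \<longrightarrow> 2*j+2 \<in> V \<and> gE j \<in> C" for j
  proof (induction j rule: less_induct)
    case (less j)
    show ?case
    proof
      assume jm: "j < m"
      show "2*j+2 \<in> V \<and> gE j \<in> C"
      proof (cases "j = 0")
        case True
        obtain w where w: "{2,w} \<in> C" "{2,w} \<notin> MK m" using getnb two by blast
        have "(w + 3 = 2 \<or> w + 5 = 2 \<or> (2 = (2::nat) \<and> w = 4) \<or> (2 = (4::nat) \<and> w = 2)) \<and> 1 \<le> w \<and> w \<le> k"
          using nbr_even[OF k CEm[OF w(1)] w(2), of 0] by simp
        then have "w = 4" by arith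
        then show ?thesis using w True two by (simp add: gE_def numeral_2_eq_2)
      next
        case False
        show ?thesis
        proof (cases "j = 1")
          case True
          have "gE 0 \<in> C" using less[of 0] jm True by simp
          then have "{2,4} \<in> C" by (simp add: gE_def)
          then have "4 \<in> V" using inV by blast
          then show ?thesis using True \<open>{2,4} \<in> C\<close> by (simp add: gE_def)
        next
          case j1: False
          have "2*(j-2)+2 \<in> V" using less[of "j-2"] jm False by simp
          then have "{2*(j-2)+1, 2*(j-2)+2} \<in> C" using mate by blast
          then have xV: "2*(j-2)+1 \<in> V" using inV by blast
          obtain w where w: "{2*(j-2)+1,w} \<in> C" "{2*(j-2)+1,w} \<notin> MK m" using getnb xV by blast
          have nb: "(w = 2*(j-2)+1 + 3 \<or> w = 2*(j-2)+1 + 5 \<or> (2*(j-2)+1 = k - 3 \<and> w = k - 1) \<or> (2*(j-2)+1 = k - 1 \<and> w = k - 3)) \<and> 1 \<le> w \<and> w \<le> k"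
            using nbr_odd[OF k CEm[OF w(1)] w(2)] by simp
          have "w \<noteq> 2*j"
          proof
            assume w2: "w = 2*j"
            have g1: "gE (j-1) \<in> C" using less[of "j-1"] jm False by simp
            have "2*j \<in> gE (j-1)" using False by (auto simp: gE_def)
            moreover have "2*j \<in> {2*(j-2)+1,w}" using w2 by simp
            ultimately have "{2*(j-2)+1,w} = gE (j-1)"
              using Un[OF w(1) g1 w(2) gE_notM] by blast
            then have "2*(j-2)+1 \<in> gE (j-1)" by auto
            then show False using False j1 by (auto simp: gE_def split: if_splits)
          qed
          then have "w = 2*j+2" using nb jm k False j1 by arith
          moreover have "gE j = {2*(j-2)+1, 2*j+2}" using False j1 by (auto simp: gE_def)
          ultimately show ?thesis using w inV by auto
        qed
      qed
    qed
  qed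
  have r1: "MK m \<subseteq> C"
  proof
    fix e assume "e \<in> MK m"
    then obtain j where j: "j < m" "e = {2*j+1, 2*j+2}" using MK_elem by blast
    then have "2*j+2 \<in> V" using step2 by blast
    then show "e \<in> C" using mate j by blast
  qed
  have r2: "{2,4} \<in> C" using step2[of 0] k by (simp add: gE_def)
  have r3: "{2*j+1, 2*j+6} \<in> C" if "j+3 \<le> m" for j
  proof -
    have "gE (j+2) \<in> C" using step2[of "j+2"] that by simp
    moreover have "gE (j+2) = {2*j+1, 2*j+6}"
    proof -
      have e1: "2*(j+2)-3 = 2*j+1" "2*(j+2)+2 = 2*j+6" by arith+
      have "gE (j+2) = {2*(j+2)-3, 2*(j+2)+2}" by (simp add: gE_def)
      also have "\<dots> = {2*j+1, 2*j+6}" by (simp only: e1)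
      finally show ?thesis .
    qed
    ultimately show ?thesis by simp
  qed
  have "2*(m-1)+2 \<in> V" using step2[of "m-1"] k by simp
  then have "{2*(m-1)+1, 2*(m-1)+2} \<in> C" using mate by blast
  then have xV: "2*(m-1)+1 \<in> V" using inV by blast
  obtain w where w: "{2*(m-1)+1,w} \<in> C" "{2*(m-1)+1,w} \<notin> MK m" using getnb xV by blast
  have nb: "(w = 2*(m-1)+1 + 3 \<or> w = 2*(m-1)+1 + 5 \<or> (2*(m-1)+1 = k - 3 \<and> w = k - 1) \<or> (2*(m-1)+1 = k - 1 \<and> w = k - 3)) \<and> 1 \<le> w \<and> w \<le> k"
    using nbr_odd[OF k CEm[OF w(1)] w(2)] by simp
  then have "w = k - 3" "2*(m-1)+1 = k - 1" using k by arith+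
  then have r4: "{k-3,k-1} \<in> C" using w(1) by (simp add: insert_commute)
  show ?thesis using r1 r2 r3 r4 by blast
qed

definition qf :: "nat \<Rightarrow> nat \<Rightarrow> nat" where
  "qf m t = (if t < m div 2 then 2*t+1 else 2*(m-1-t))"

definition hK :: "nat \<Rightarrow> nat \<Rightarrow> nat" where
  "hK m i = (if odd (qf m (i div 2)) = (i mod 2 = 0) then 2 * qf m (i div 2) + 2 else 2 * qf m (i div 2) + 1)"

lemma hA: "t < m div 2 \<Longrightarrow> hK m (2*t) = 4*t+4 \<and> hK m (2*t+1) = 4*t+3"
  by (simp add: hK_def qf_def)

lemma hB: "m div 2 \<le> t \<Longrightarrow> hK m (2*t) = 4*(m-1-t)+1 \<and> hK m (2*t+1) = 4*(m-1-t)+2"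
  by (simp add: hK_def qf_def)

lemma piK_bij2:
  assumes k: "k = 2*m" "m \<ge> 2"
  shows "bij_betw (piK k) {1..k} {1..k}"
proof -
  have val: "\<exists>a. (u = 2*a+1 \<and> piK k u = (if a + 1 = m then 2*m - 1 else 2*a+4)) \<or>
                 (u = 2*a+2 \<and> piK k u = (if a = 0 then 2 else 2*a - 1))" if uk: "u \<in> {1..k}" for u
  proof -
    obtain a where "u = 2*a+1 \<or> u = 2*a+2" using nat_par[of u] uk by auto
    then show ?thesis using piK_odd[of m a] piK_even[of m a] k by auto
  qed
  have inj: "inj_on (piK k) {1..k}"
  proof
    fix u w assume u: "u \<in> {1..k}" and w: "w \<in> {1..k}" and eq: "piK k u = piK k w"
    have ru: "u \<le> 2*m" "w \<le> 2*m" using u w k by auto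
    obtain a where "u = 2*a+1 \<or> u = 2*a+2" using nat_par[of u] u by auto
    moreover obtain b where "w = 2*b+1 \<or> w = 2*b+2" using nat_par[of w] w by auto
    ultimately show "u = w"
    proof (elim disjE)
      assume ua: "u = 2*a+1" and wb: "w = 2*b+1"
      have "(if a + 1 = m then 2*m - 1 else 2*a+4) = (if b + 1 = m then 2*m - 1 else (2::nat)*b+4)"
        using eq piK_odd[of m a] piK_odd[of m b] ua wb k by simp
      then show ?thesis using ua wb by (simp split: if_splits; arith)
    next
      assume ua: "u = 2*a+1" and wb: "w = 2*b+2"
      have "(if a + 1 = m then 2*m - 1 else 2*a+4) = (if b = 0 then 2 else (2::nat)*b - 1)"
        using eq piK_odd[of m a] piK_even[of m b] ua wb k by simp
      then show ?thesis using ua wb ru k by (simp split: if_splits; arith)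
    next
      assume ua: "u = 2*a+2" and wb: "w = 2*b+1"
      have "(if a = 0 then 2 else 2*a - 1) = (if b + 1 = m then 2*m - 1 else (2::nat)*b+4)"
        using eq piK_even[of m a] piK_odd[of m b] ua wb k by simp
      then show ?thesis using ua wb ru k by (simp split: if_splits; arith)
    next
      assume ua: "u = 2*a+2" and wb: "w = 2*b+2"
      have "(if a = 0 then 2 else 2*a - 1) = (if b = 0 then 2 else (2::nat)*b - 1)"
        using eq piK_even[of m a] piK_even[of m b] ua wb k by simp
      then show ?thesis using ua wb by (simp split: if_splits; arith)
    qed
  qed
  have sub: "piK k ` {1..k} \<subseteq> {1..k}"
  proof
    fix y assume "y \<in> piK k ` {1..k}"
    then obtain u where u: "u \<in> {1..k}" "y = piK k u" by blast
    obtain a where a: "(u = 2*a+1 \<and> piK k u = (if a + 1 = m then 2*m - 1 else 2*a+4)) \<or>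
                 (u = 2*a+2 \<and> piK k u = (if a = 0 then 2 else 2*a - 1))" using val u by blast
    have "u \<le> 2*m" using u k by auto
    then show "y \<in> {1..k}" using a u k by (auto split: if_splits)
  qed
  have "piK k ` {1..k} = {1..k}" using endo_inj_surj[OF _ sub inj] by simp
  then show ?thesis using inj by (simp add: bij_betw_def)
qed

lemma Mform_E:
  assumes k: "k = 2*m" "m \<ge> 2" and j: "j < m"
  shows "{2*j+1, 2*j+2} \<in> perm_graph_edges k (piK k)"
proof -
  have "(if j = 0 then 2 else (2::nat)*j - 1) < (if j + 1 = m then 2*m - 1 else 2*j+4)"
    using k j by (simp split: if_splits; arith)
  then have "piK k (2*j+2) < piK k (2*j+1)" using piK_odd[of m j] piK_even[of m j] k by simp
  then show ?thesis using E_mem[of "2*j+1" "2*j+2" k] k j by simp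
qed

lemma e24_E:
  assumes k: "k = 2*m" "m \<ge> 2"
  shows "{2,4} \<in> perm_graph_edges k (piK k)"
proof -
  have "piK k 4 < piK k 2" by (simp add: piK_def)
  then show ?thesis using E_mem[of 2 4 k] k by simp
qed

lemma ej6_E:
  assumes k: "k = 2*m" "m \<ge> 2" and j: "j + 3 \<le> m"
  shows "{2*j+1, 2*j+6} \<in> perm_graph_edges k (piK k)"
proof -
  have a: "piK k (2*j+1) = 2*j+4" using piK_odd[of m j] k j by simp
  have e: "2*j+6 = 2*(j+2)+2" by arith
  have b: "piK k (2*j+6) = 2*j+3" unfolding e using piK_even[of m "j+2"] k by simp
  show ?thesis using E_mem[of "2*j+1" "2*j+6" k] k j a b by simp
qed

lemma ekk_E:
  assumes k: "k = 2*m" "m \<ge> 2"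
  shows "{k-3, k-1} \<in> perm_graph_edges k (piK k)"
proof -
  have e1: "k - 3 = 2*(m-2)+1" "k - 1 = 2*(m-1)+1" using k by arith+
  have ne: "(m-2)+1 \<noteq> m" "2*(m-2)+4 = 2*m" using k by arith+
  have a: "piK k (k-3) = 2*m" unfolding e1 using piK_odd[of m "m-2"] k ne by simp
  have b: "piK k (k-1) = 2*m-1" unfolding e1 using piK_odd[of m "m-1"] k by simp
  show ?thesis using E_mem[of "k-3" "k-1" k] k a b by simp
qed

definition vs0 :: "nat \<Rightarrow> nat list" where
  "vs0 m = map (hK m) [0..<2*m]"

lemma vs0_len: "length (vs0 m) = 2*m" by (simp add: vs0_def)

lemma vs0_cyc:
  assumes "i < 2*m"
  shows "cyc_edge (vs0 m) i = {hK m i, hK m (if i + 1 = 2*m then 0 else i + 1)}"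
proof -
  have "(i + 1) mod (2*m) = (if i + 1 = 2*m then 0 else i + 1)" using succ_mod[OF assms] .
  moreover have "(if i + 1 = 2*m then 0 else i + 1) < 2*m" using assms by auto
  ultimately show ?thesis using assms unfolding cyc_edge_def vs0_def by simp
qed

lemma even_edge:
  assumes m: "m \<ge> 2" and t: "t < m"
  shows "\<exists>j<m. cyc_edge (vs0 m) (2*t) = {2*j+1, 2*j+2}"
proof -
  have c: "cyc_edge (vs0 m) (2*t) = {hK m (2*t), hK m (2*t+1)}"
    using vs0_cyc[of "2*t" m] t by simp
  show ?thesis
  proof (cases "t < m div 2")
    case True
    have v: "hK m (2*t) = 2*(2*t+1)+2" "hK m (2*t+1) = 2*(2*t+1)+1" using hA[OF True] by arith+
    have "cyc_edge (vs0 m) (2*t) = {2*(2*t+1)+2, 2*(2*t+1)+1}" by (simp only: c v)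
    moreover have "2*t+1 < m" using True by arith
    ultimately show ?thesis by (metis insert_commute)
  next
    case False
    have v: "hK m (2*t) = 2*(2*(m-1-t))+1" "hK m (2*t+1) = 2*(2*(m-1-t))+2" using hB[of m t] False by arith+
    have "cyc_edge (vs0 m) (2*t) = {2*(2*(m-1-t))+1, 2*(2*(m-1-t))+2}" by (simp only: c v)
    moreover have "2*(m-1-t) < m" using False t by arith
    ultimately show ?thesis by blast
  qed
qed

lemma odd_edge:
  assumes m: "m \<ge> 2" and t: "t < m"
  shows "cyc_edge (vs0 m) (2*t+1) = {2,4} \<or> (\<exists>j. j + 3 \<le> m \<and> cyc_edge (vs0 m) (2*t+1) = {2*j+1, 2*j+6})
     \<or> cyc_edge (vs0 m) (2*t+1) = {2*m-3, 2*m-1}"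
proof (cases "t + 1 = m")
  case True
  have c: "cyc_edge (vs0 m) (2*t+1) = {hK m (2*t+1), hK m (2*0)}"
    using vs0_cyc[of "2*t+1" m] t True by simp
  have "m div 2 \<le> t" using True by arith
  then have "hK m (2*t+1) = 2" using hB[of m t] True by simp
  moreover have "0 < m div 2" using m by arith
  then have "hK m (2*0) = 4" using hA[of 0 m] by simp
  ultimately show ?thesis using c by simp
next
  case tm: False
  have c: "cyc_edge (vs0 m) (2*t+1) = {hK m (2*t+1), hK m (2*(t+1))}"
    using vs0_cyc[of "2*t+1" m] t tm by simp
  show ?thesis
  proof (cases "t + 1 < m div 2")
    case True
    have v1: "hK m (2*t+1) = 2*(2*t+1)+1" using hA[of t m] True by simp
    have v2: "hK m (2*(t+1)) = 2*(2*t+1)+6" using hA[of "t+1" m] True by simp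
    have "(2*t+1) + 3 \<le> m" using True by arith
    moreover have "cyc_edge (vs0 m) (2*t+1) = {2*(2*t+1)+1, 2*(2*t+1)+6}" by (simp only: c v1 v2)
    ultimately show ?thesis by blast
  next
    case F2: False
    show ?thesis
    proof (cases "t + 1 = m div 2")
      case True
      have a: "hK m (2*t+1) = 4*t+3" using hA[of t m] True by simp
      have le: "m div 2 \<le> t+1" using True by simp
      have hb: "hK m (2*(t+1)) = 4*(m-1-(t+1))+1" using hB[OF le] by (rule conjunct1)
      have b: "hK m (2*(t+1)) = 4*(m-2-t)+1" using hb by arith
      have "m = 2*t+2 \<or> m = 2*t+3" using True by arith
      then have "{4*t+3, 4*(m-2-t)+1} = {2*m-3, 2*m-1}"
      proof
        assume "m = 2*t+2"
        then have "4*t+3 = 2*m-1" "4*(m-2-t)+1 = 2*m-3" by arith+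
        then show ?thesis by (simp add: insert_commute)
      next
        assume "m = 2*t+3"
        then have "4*t+3 = 2*m-3" "4*(m-2-t)+1 = 2*m-1" by arith+
        then show ?thesis by simp
      qed
      then show ?thesis using a b c by simp
    next
      case False
      then have tu: "m div 2 \<le> t" using F2 by arith
      have ha: "hK m (2*t+1) = 4*(m-1-t)+2" using hB[OF tu] by (rule conjunct2)
      have a: "hK m (2*t+1) = 2*(2*(m-2-t))+6" using ha tm t by arith
      have le: "m div 2 \<le> t+1" using tu by simp
      have hb: "hK m (2*(t+1)) = 4*(m-1-(t+1))+1" using hB[OF le] by (rule conjunct1)
      have b: "hK m (2*(t+1)) = 2*(2*(m-2-t))+1" using hb by arith
      have "2*(m-2-t) + 3 \<le> m" using tu tm t m by arith
      moreover have "cyc_edge (vs0 m) (2*t+1) = {2*(2*(m-2-t))+1, 2*(2*(m-2-t))+6}"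
        by (simp only: c a b insert_commute)
      ultimately show ?thesis by blast
    qed
  qed
qed

lemma m4: "(4*(t::nat) + c) mod 4 = c mod 4" by simp
lemma ar1: "(r::nat) < 2 \<Longrightarrow> r' < 2 \<Longrightarrow> 4*t+4-r = 4*t'+4-r' \<Longrightarrow> t = t' \<and> r = r'"
proof -
  assume a: "r < 2" "r' < 2" "4*t+4-r = 4*t'+4-r'"
  then have "(4*t+4-r) mod 4 = (4*t'+4-r') mod 4" by simp
  moreover have "4*t+4-r = 4*t + (4 - r)" "4*t'+4-r' = 4*t' + (4-r')" using a by arith+
  ultimately have "(4 - r) mod 4 = (4 - r') mod 4" by (simp only: m4)
  then have "r = r'" using a by (cases r; cases r') auto
  then show ?thesis using a by simp
qed
lemma ar2: "(r::nat) < 2 \<Longrightarrow> r' < 2 \<Longrightarrow> 4*t+4-r = 4*s+1+r' \<Longrightarrow> False"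
proof -
  assume a: "r < 2" "r' < 2" "4*t+4-r = 4*s+1+r'"
  then have "(4*t+4-r) mod 4 = (4*s+1+r') mod 4" by simp
  moreover have "4*t+4-r = 4*t + (4 - r)" "4*s+1+r' = 4*s + (1+r')" using a by arith+
  ultimately have "(4 - r) mod 4 = (1+r') mod 4" by (simp only: m4)
  then show False using a by (cases r; cases r') auto
qed
lemma ar3: "(r::nat) < 2 \<Longrightarrow> r' < 2 \<Longrightarrow> 4*s+1+r = 4*s'+1+r' \<Longrightarrow> s = s' \<and> r = r'"
proof -
  assume a: "r < 2" "r' < 2" "4*s+1+r = 4*s'+1+r'"
  then have "(4*s+(1+r)) mod 4 = (4*s'+(1+r')) mod 4" by (simp add: add.assoc)
  then have "(1+r) mod 4 = (1+r') mod 4" by (simp only: m4)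
  then have "r = r'" using a by (cases r; cases r') auto
  then show ?thesis using a by simp
qed

lemma hK_val:
  assumes "i < 2*m"
  shows "(i div 2 < m div 2 \<and> hK m i = 4*(i div 2)+4 - i mod 2) \<or>
         (m div 2 \<le> i div 2 \<and> hK m i = 4*(m-1-i div 2)+1 + i mod 2)"
proof -
  define t where "t = i div 2"
  have "i = 2*t \<or> i = 2*t+1" unfolding t_def by arith
  then show ?thesis
  proof
    assume it: "i = 2*t"
    have tm: "i div 2 = t" "i mod 2 = 0" using it by simp_all
    show ?thesis
    proof (cases "t < m div 2")
      case True then show ?thesis using hA[OF True] it tm by simp
    next
      case False then show ?thesis using hB[of m t] it tm by simp
    qed
  next
    assume it: "i = 2*t+1"
    have tm: "i div 2 = t" "i mod 2 = 1" using it by simp_all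
    show ?thesis
    proof (cases "t < m div 2")
      case True then show ?thesis using hA[OF True] it tm by simp
    next
      case False then show ?thesis using hB[of m t] it tm by simp
    qed
  qed
qed

lemma hK_inj: "inj_on (hK m) {0..<2*m}"
proof
  fix a b assume a: "a \<in> {0..<2*m}" and b: "b \<in> {0..<2*m}" and eq: "hK m a = hK m b"
  have ra: "a mod 2 < 2" "b mod 2 < 2" by simp_all
  have ad: "a = 2*(a div 2) + a mod 2" "b = 2*(b div 2) + b mod 2" by simp_all
  have al: "a div 2 < m" "b div 2 < m" using a b by auto
  have aL: "a < 2*m" "b < 2*m" using a b by auto
  from hK_val[OF aL(1)] hK_val[OF aL(2)] show "a = b"
  proof (elim disjE conjE)
    assume h: "hK m a = 4*(a div 2)+4 - a mod 2" "hK m b = 4*(b div 2)+4 - b mod 2"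
    have "4*(a div 2)+4 - a mod 2 = 4*(b div 2)+4 - b mod 2" using h eq by simp
    from ar1[OF ra this] show ?thesis using ad by simp
  next
    assume h: "hK m a = 4*(a div 2)+4 - a mod 2" "hK m b = 4*(m-1-b div 2)+1 + b mod 2"
    have "4*(a div 2)+4 - a mod 2 = 4*(m-1-b div 2)+1 + b mod 2" using h eq by simp
    from ar2[OF ra this] show ?thesis by simp
  next
    assume h: "hK m a = 4*(m-1-a div 2)+1 + a mod 2" "hK m b = 4*(b div 2)+4 - b mod 2"
    have "4*(b div 2)+4 - b mod 2 = 4*(m-1-a div 2)+1 + a mod 2" using h eq by simp
    from ar2[OF ra(2,1) this] show ?thesis by simp
  next
    assume h: "hK m a = 4*(m-1-a div 2)+1 + a mod 2" "hK m b = 4*(m-1-b div 2)+1 + b mod 2"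
    have "4*(m-1-a div 2)+1 + a mod 2 = 4*(m-1-b div 2)+1 + b mod 2" using h eq by simp
    from ar3[OF ra this] have "m-1-a div 2 = m-1-b div 2" "a mod 2 = b mod 2" by simp_all
    then have "a div 2 = b div 2" "a mod 2 = b mod 2" using al by arith+
    then show ?thesis using ad by simp
  qed
qed

lemma vs0_distinct: "distinct (vs0 m)"
  unfolding vs0_def using hK_inj[of m] by (simp add: distinct_map atLeast0LessThan)

theorem theorem11:
  fixes k :: nat
  assumes "even k" and "k \<ge> 4"
  shows "\<exists>n \<pi> M. bij_betw \<pi> {1..n} {1..n} \<and>
           is_matching (perm_graph_edges n \<pi>) M \<and>
           (\<exists>C. alt_cycle (perm_graph_edges n \<pi>) M C \<and> card C = k \<and>
                (\<forall>C'. alt_cycle (perm_graph_edges n \<pi>) M C' \<longrightarrow> C' = C))"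
proof -
  obtain m where km: "k = 2*m" using assms(1) by (auto elim: evenE)
  have m2: "m \<ge> 2" using km assms(2) by simp
  note k = km m2
  define E where "E = perm_graph_edges k (piK k)"
  define M where "M = MK m"
  define C0 where "C0 = cyc_edge (vs0 m) ` {..<2*m}"
  have bij: "bij_betw (piK k) {1..k} {1..k}" using piK_bij2[OF k] .
  have MsubE: "M \<subseteq> E"
  proof
    fix e assume "e \<in> M"
    then obtain j where "j < m" "e = {2*j+1, 2*j+2}" using MK_elem M_def by blast
    then show "e \<in> E" using Mform_E[OF k] E_def by simp
  qed
  have match: "is_matching E M"
    unfolding is_matching_def
  proof (intro conjI ballI impI)
    show "M \<subseteq> E" by (rule MsubE)
  next
    fix e f assume eM: "e \<in> M" and fM: "f \<in> M" and nef: "e \<noteq> f"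
    obtain i where ei: "e = {2*i+1, 2*i+2}" using MK_elem eM M_def by blast
    obtain j where fj: "f = {2*j+1, 2*j+2}" using MK_elem fM M_def by blast
    show "e \<inter> f = {}"
    proof (rule ccontr)
      assume "e \<inter> f \<noteq> {}"
      then obtain x where "x \<in> e" "x \<in> f" by blast
      then have "(x = 2*i+1 \<or> x = 2*i+2) \<and> (x = 2*j+1 \<or> x = 2*j+2)" using ei fj by simp
      then have "i = j" by arith
      then show False using ei fj nef by simp
    qed
  qed
  have forms_notM: "{2,4} \<notin> M" "\<And>j. {2*j+1, 2*j+6} \<notin> M" "{2*m-3, 2*m-1} \<notin> M"
  proof -
    show "{2,4} \<notin> M" using MK_diff[of 2 4 m] M_def by auto
    show "{2*j+1, 2*j+6} \<notin> M" for j using MK_diff[of "2*j+1" "2*j+6" m] M_def by auto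
    show "{2*m-3, 2*m-1} \<notin> M" using MK_diff[of "2*m-3" "2*m-1" m] M_def m2 by auto
  qed
  have kk: "{2*m-3, 2*m-1} = {k-3, k-1}" using km by simp
  have edges: "cyc_edge (vs0 m) i \<in> E \<and> (cyc_edge (vs0 m) i \<in> M \<longleftrightarrow> even i)" if "i < 2*m" for i
  proof -
    define t where "t = i div 2"
    have tm: "t < m" using that t_def by auto
    have "i = 2*t \<or> i = 2*t+1" unfolding t_def by arith
    then show ?thesis
    proof
      assume it: "i = 2*t"
      obtain j where "j < m" "cyc_edge (vs0 m) (2*t) = {2*j+1, 2*j+2}" using even_edge[OF m2 tm] by blast
      then show ?thesis using it Mform_E[OF k] MK_mem[of j m] E_def M_def by simp
    next
      assume it: "i = 2*t+1"
      have oi: "odd i" using it by simp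
      from odd_edge[OF m2 tm] show ?thesis
      proof (elim disjE exE conjE)
        assume "cyc_edge (vs0 m) (2 * t + 1) = {2, 4}"
        then show ?thesis using it e24_E[OF k] forms_notM E_def by simp
      next
        fix j assume "j + 3 \<le> m" "cyc_edge (vs0 m) (2 * t + 1) = {2 * j + 1, 2 * j + 6}"
        then show ?thesis using it ej6_E[OF k] forms_notM E_def by simp
      next
        assume "cyc_edge (vs0 m) (2 * t + 1) = {2 * m - 3, 2 * m - 1}"
        then show ?thesis using it ekk_E[OF k] forms_notM kk E_def by simp
      qed
    qed
  qed
  have alt0: "alt_cycle E M C0"
    unfolding alt_cycle_def
    apply (rule exI[of _ "vs0 m"])
    using vs0_distinct[of m] vs0_len[of m] m2 edges C0_def by auto
  have cardC0: "card C0 = k"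
  proof -
    have "inj_on (cyc_edge (vs0 m)) {..<length (vs0 m)}"
      using cyc_inj[OF vs0_distinct[of m]] vs0_len[of m] m2 by simp
    then show ?thesis using C0_def vs0_len[of m] km by (simp add: card_image)
  qed
  have uniq0: "C' = C0" if alt: "alt_cycle E M C'" for C'
  proof -
    note P = alt_props[OF alt]
    have F: "MK m \<subseteq> C' \<and> {2,4} \<in> C' \<and> (\<forall>j. j+3 \<le> m \<longrightarrow> {2*j+1, 2*j+6} \<in> C') \<and> {k-3,k-1} \<in> C'"
      using uniq[OF k, of C'] P E_def M_def by blast
    have sub: "C0 \<subseteq> C'"
    proof
      fix e assume "e \<in> C0"
      then obtain i where i: "i < 2*m" "e = cyc_edge (vs0 m) i" using C0_def by blast
      define t where "t = i div 2"
      have tm: "t < m" using i t_def by auto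
      have "i = 2*t \<or> i = 2*t+1" unfolding t_def by arith
      then show "e \<in> C'"
      proof
        assume it: "i = 2*t"
        obtain j where "j < m" "cyc_edge (vs0 m) (2*t) = {2*j+1, 2*j+2}" using even_edge[OF m2 tm] by blast
        then show ?thesis using it i F MK_mem[of j m] by auto
      next
        assume it: "i = 2*t+1"
        from odd_edge[OF m2 tm] show ?thesis
          using it i F kk by auto
      qed
    qed
    have U1: "\<Union>C' \<subseteq> {1..k}"
    proof
      fix x assume "x \<in> \<Union>C'"
      then obtain e where "e \<in> C'" "x \<in> e" by blast
      then have "e \<in> perm_graph_edges k (piK k)" using P(1) E_def by auto
      then obtain u w where "e = {u,w}" "u \<in> {1..k}" "w \<in> {1..k}" using pge_elem by blast
      then show "x \<in> {1..k}" using \<open>x \<in> e\<close> by auto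
    qed
    have "card C' \<le> card (\<Union>C')" using P(3) .
    also have "\<dots> \<le> card {1..k}" using card_mono[OF finite_atLeastAtMost U1] .
    finally have "card C' \<le> k" by simp
    moreover have "card C0 \<le> card C'" using sub P(2) by (simp add: card_mono)
    ultimately have "card C0 = card C'" using cardC0 by simp
    then show ?thesis using card_subset_eq[OF P(2) sub] by simp
  qed
  show ?thesis
    apply (rule exI[of _ k], rule exI[of _ "piK k"], rule exI[of _ M])
    using bij match alt0 cardC0 uniq0 E_def by blast
qed

end
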